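(* Let $s,t\ge1$ and let $f=(f_1,\dots,f_{t+1}):\Delta^s\to\Delta^t$. If some finite automaton over the alphabet $\{1,\dots,s+1\}$ simulates $f$, then each $f_j$ is a rational function with rational coefficients on $\Delta^s$: there exist $g_j,h_j\in\mathbb Z[x_1,\dots,x_{s+1}]$ with $h_j(p)\neq0$ and $f_j(p)=g_j(p)/h_j(p)$ for all $p\in\Delta^s$.
   Context: $\Delta^s=\{p\in(0,1)^{s+1}:\sum_{i=1}^{s+1}p_i=1\}$ is the open simplex of probability vectors. For a word $w$ over the alphabet $\{1,\dots,s+1\}$ let $n_i(w)$ be the number of occurrences of $i$, and for $p\in\Delta^s$ put $\mathbf P_p[w]=\prod_i p_i^{n_i(w)}$, $\mathbf P_p[L]=\sum_{w\in L}\mathbf P_p[w]$ (the law of i.i.d. letters with distribution $p$). A simulation of $f=(f_1,\dots,f_{t+1}):\Delta^s\to\Delta^t$ is a tuple of pairwise disjoint languages $L_1,\dots,L_{t+1}$ over $\{1,\dots,s+1\}$ whose union is prefix-free (no word is a proper prefix of another) such that $\mathbf P_p[L_j]=f_j(p)$ for all $p\in\Delta^s$ and all $j$. A finite automaton over this alphabet consists of a finite state set $S$, a start state $s_0$, a transition function $\delta:S\times\{1,\dots,s+1\}\to S$ (extended to words), and pairwise disjoint absorbing final-state sets $S_1,\dots,S_{t+1}$; $L_j$ is the set of words $w$ with $\delta(s_0,w)\in S_j$ and no proper prefix of $w$ leading into a final state. The automaton simulates $f$ if $(L_1,\dots,L_{t+1})$ is a simulation of $f$. *)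

theory Defs
  imports "HOL-Analysis.Analysis"
begin

definition alphabet :: "nat \<Rightarrow> nat set" where
  "alphabet n = {1..n+1}"

definition open_simplex :: "nat \<Rightarrow> (nat \<Rightarrow> real) set" where
  "open_simplex n = {p. (\<forall>i\<in>{1..n+1}. 0 < p i \<and> p i < 1) \<and> (\<forall>i. i \<notin> {1..n+1} \<longrightarrow> p i = 0)
                  \<and> (\<Sum>i=1..n+1. p i) = 1}"

definition word_prob :: "(nat \<Rightarrow> real) \<Rightarrow> nat list \<Rightarrow> real" where
  "word_prob p w = prod_list (map p w)"

definition prefix_free :: "'a list set \<Rightarrow> bool" where
  "prefix_free U \<longleftrightarrow> (\<forall>u\<in>U. \<forall>v\<in>U. \<not> (\<exists>z. z \<noteq> [] \<and> v = u @ z))"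

text \<open>A simulation of f : Delta^s -> Delta^t (components f 1, ..., f (t+1)) by languages L 1, ..., L (t+1).
  P_p[L j] = f j p is expressed as a convergent (unordered) sum.\<close>
definition simulation ::
  "nat \<Rightarrow> nat \<Rightarrow> (nat \<Rightarrow> (nat \<Rightarrow> real) \<Rightarrow> real) \<Rightarrow> (nat \<Rightarrow> nat list set) \<Rightarrow> bool" where
  "simulation s t f L \<longleftrightarrow>
     (\<forall>j\<in>{1..t+1}. \<forall>w\<in>L j. set w \<subseteq> alphabet s)
   \<and> (\<forall>j\<in>{1..t+1}. \<forall>k\<in>{1..t+1}. j \<noteq> k \<longrightarrow> L j \<inter> L k = {})
   \<and> prefix_free (\<Union>j\<in>{1..t+1}. L j)
   \<and> (\<forall>p\<in>open_simplex s. \<forall>j\<in>{1..t+1}. (word_prob p has_sum f j p) (L j))"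

definition is_automaton ::
  "nat \<Rightarrow> nat \<Rightarrow> 'q set \<Rightarrow> 'q \<Rightarrow> ('q \<Rightarrow> nat \<Rightarrow> 'q) \<Rightarrow> (nat \<Rightarrow> 'q set) \<Rightarrow> bool" where
  "is_automaton s t S q0 \<delta> SF \<longleftrightarrow>
     finite S \<and> q0 \<in> S
   \<and> (\<forall>q\<in>S. \<forall>a\<in>alphabet s. \<delta> q a \<in> S)
   \<and> (\<forall>j\<in>{1..t+1}. SF j \<subseteq> S)
   \<and> (\<forall>j\<in>{1..t+1}. \<forall>k\<in>{1..t+1}. j \<noteq> k \<longrightarrow> SF j \<inter> SF k = {})
   \<and> (\<forall>j\<in>{1..t+1}. \<forall>q\<in>SF j. \<forall>a\<in>alphabet s. \<delta> q a \<in> SF j)"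

definition run :: "('q \<Rightarrow> nat \<Rightarrow> 'q) \<Rightarrow> 'q \<Rightarrow> nat list \<Rightarrow> 'q" where
  "run \<delta> q w = foldl \<delta> q w"

definition automaton_lang ::
  "nat \<Rightarrow> nat \<Rightarrow> 'q \<Rightarrow> ('q \<Rightarrow> nat \<Rightarrow> 'q) \<Rightarrow> (nat \<Rightarrow> 'q set) \<Rightarrow> nat \<Rightarrow> nat list set" where
  "automaton_lang s t q0 \<delta> SF j =
     {w. set w \<subseteq> alphabet s \<and> run \<delta> q0 w \<in> SF j
         \<and> (\<forall>k<length w. run \<delta> q0 (take k w) \<notin> (\<Union>i\<in>{1..t+1}. SF i))}"

definition automaton_simulates ::
  "nat \<Rightarrow> nat \<Rightarrow> 'q set \<Rightarrow> 'q \<Rightarrow> ('q \<Rightarrow> nat \<Rightarrow> 'q) \<Rightarrow> (nat \<Rightarrow> 'q set)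
     \<Rightarrow> (nat \<Rightarrow> (nat \<Rightarrow> real) \<Rightarrow> real) \<Rightarrow> bool" where
  "automaton_simulates s t S q0 \<delta> SF f \<longleftrightarrow>
     is_automaton s t S q0 \<delta> SF \<and> simulation s t f (automaton_lang s t q0 \<delta> SF)"

text \<open>Polynomial functions with integer coefficients in the variables x_1, ..., x_n,
  i.e. the evaluation maps of elements of Z[x_1,...,x_n].\<close>
inductive_set int_poly_fun :: "nat \<Rightarrow> ((nat \<Rightarrow> real) \<Rightarrow> real) set" for n :: nat where
  const: "(\<lambda>x. real_of_int c) \<in> int_poly_fun n"
| var: "i \<in> {1..n} \<Longrightarrow> (\<lambda>x. x i) \<in> int_poly_fun n"
| add: "g \<in> int_poly_fun n \<Longrightarrow> h \<in> int_poly_fun n \<Longrightarrow> (\<lambda>x. g x + h x) \<in> int_poly_fun n"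
| mult: "g \<in> int_poly_fun n \<Longrightarrow> h \<in> int_poly_fun n \<Longrightarrow> (\<lambda>x. g x * h x) \<in> int_poly_fun n"

end

theory Submission
  imports Defs "Jordan_Normal_Form.Determinant"
begin

subsection \<open>Closure properties of integer polynomial functions\<close>

lemma ipf_sum:
  assumes "finite I" "\<And>i. i \<in> I \<Longrightarrow> g i \<in> int_poly_fun n"
  shows "(\<lambda>x. \<Sum>i\<in>I. g i x) \<in> int_poly_fun n"
  using assms
proof (induction I rule: finite_induct)
  case empty
  then show ?case using int_poly_fun.const[of 0 n] by simp
next
  case (insert a I)
  have e: "(\<lambda>x. \<Sum>i\<in>insert a I. g i x) = (\<lambda>x. g a x + (\<Sum>i\<in>I. g i x))"
    using insert by simp
  show ?case unfolding e by (rule int_poly_fun.add) (use insert in auto)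
qed

lemma ipf_prod:
  assumes "finite I" "\<And>i. i \<in> I \<Longrightarrow> g i \<in> int_poly_fun n"
  shows "(\<lambda>x. \<Prod>i\<in>I. g i x) \<in> int_poly_fun n"
  using assms
proof (induction I rule: finite_induct)
  case empty
  then show ?case using int_poly_fun.const[of 1 n] by simp
next
  case (insert a I)
  have e: "(\<lambda>x. \<Prod>i\<in>insert a I. g i x) = (\<lambda>x. g a x * (\<Prod>i\<in>I. g i x))"
    using insert by simp
  show ?case unfolding e by (rule int_poly_fun.mult) (use insert in auto)
qed

lemma ipf_const_int: "(\<lambda>x. of_int c :: real) \<in> int_poly_fun n"
  by (rule int_poly_fun.const)

lemma ipf_zero: "(\<lambda>x. 0 :: real) \<in> int_poly_fun n"
  using int_poly_fun.const[of 0 n] by simp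

lemma ipf_one: "(\<lambda>x. 1 :: real) \<in> int_poly_fun n"
  using int_poly_fun.const[of 1 n] by simp

lemma ipf_ite01: "(\<lambda>x. if P then 1 else 0 :: real) \<in> int_poly_fun n"
  by (cases P) (simp_all add: ipf_zero ipf_one)

lemma ipf_var_or0:
  assumes "a \<in> {1..n}"
  shows "(\<lambda>x. if P then x a else 0) \<in> int_poly_fun n"
  by (cases P) (simp_all add: ipf_zero int_poly_fun.var[OF assms])

lemma ipf_diff:
  assumes "g \<in> int_poly_fun n" "h \<in> int_poly_fun n"
  shows "(\<lambda>x. g x - h x) \<in> int_poly_fun n"
proof -
  have "(\<lambda>x. g x + (\<lambda>x. real_of_int (-1)) x * h x) \<in> int_poly_fun n"
    by (intro int_poly_fun.add int_poly_fun.mult assms int_poly_fun.const)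
  then show ?thesis by simp
qed

lemma ipf_det:
  assumes car: "\<And>x. N x \<in> carrier_mat m m"
    and ent: "\<And>i k. i < m \<Longrightarrow> k < m \<Longrightarrow> (\<lambda>x. N x $$ (i,k)) \<in> int_poly_fun n"
  shows "(\<lambda>x. det (N x) :: real) \<in> int_poly_fun n"
proof -
  have "(\<lambda>x. det (N x)) = (\<lambda>x. \<Sum>\<pi>\<in>{\<pi>. \<pi> permutes {0..<m}}.
          of_int (sign \<pi>) * (\<Prod>i=0..<m. N x $$ (i, \<pi> i)))"
    by (intro ext) (simp add: det_def carrier_matD[OF car])
  also have "\<dots> \<in> int_poly_fun n"
  proof (rule ipf_sum)
    show "finite {\<pi>. \<pi> permutes {0..<m}}" by (simp add: finite_permutations)
  next
    fix \<pi> assume "\<pi> \<in> {\<pi>. \<pi> permutes {0..<m}}"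
    hence pm: "\<pi> permutes {0..<m}" by simp
    have lt: "\<pi> i < m" if "i < m" for i
      using permutes_in_image[OF pm] that by auto
    show "(\<lambda>x. of_int (sign \<pi>) * (\<Prod>i=0..<m. N x $$ (i, \<pi> i))) \<in> int_poly_fun n"
      by (intro int_poly_fun.mult int_poly_fun.const ipf_prod) (auto intro: ent lt)
  qed
  finally show ?thesis .
qed

lemma run_Nil[simp]: "run \<delta> q [] = q" by (simp add: run_def)
lemma run_Cons[simp]: "run \<delta> q (a#w) = run \<delta> (\<delta> q a) w" by (simp add: run_def)
lemma run_append[simp]: "run \<delta> q (u@w) = run \<delta> (run \<delta> q u) w" by (simp add: run_def)

lemma word_prob_Nil[simp]: "word_prob p [] = 1" by (simp add: word_prob_def)
lemma word_prob_Cons[simp]: "word_prob p (a#w) = p a * word_prob p w" by (simp add: word_prob_def)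
lemma word_prob_append: "word_prob p (u@w) = word_prob p u * word_prob p w"
  by (simp add: word_prob_def)

lemma simplex_pos: "p \<in> open_simplex s \<Longrightarrow> a \<in> alphabet s \<Longrightarrow> p a > 0"
  by (auto simp: open_simplex_def alphabet_def)

lemma simplex_sum: "p \<in> open_simplex s \<Longrightarrow> sum p (alphabet s) = 1"
  by (auto simp: open_simplex_def alphabet_def)

lemma word_prob_pos:
  "p \<in> open_simplex s \<Longrightarrow> set u \<subseteq> alphabet s \<Longrightarrow> word_prob p u > 0"
  by (induction u) (auto simp: simplex_pos)

subsection \<open>Maximum principle\<close>

lemma maxp:
  fixes Y :: "'q \<Rightarrow> real"
  assumes finT: "finite T" and finA: "finite A" and pos: "\<forall>a\<in>A. p a > 0" and sum1: "sum p A = 1"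
    and esc: "\<forall>q\<in>T. \<exists>v. set v \<subseteq> A \<and> run \<delta> q v \<notin> T"
    and eq: "\<forall>q\<in>T. Y q = (\<Sum>a\<in>A. p a * (if \<delta> q a \<in> T then Y (\<delta> q a) else 0))"
  shows "\<forall>q\<in>T. Y q \<le> 0"
proof (rule ccontr)
  assume "\<not> (\<forall>q\<in>T. Y q \<le> 0)"
  then obtain q1 where q1: "q1 \<in> T" "Y q1 > 0" by auto
  define M where "M = Max (Y ` T)"
  have M_ge: "\<forall>q\<in>T. Y q \<le> M" using finT by (simp add: M_def)
  have "M \<in> Y ` T" unfolding M_def using finT q1 by (intro Max_in) auto
  then obtain r where r: "r \<in> T" "Y r = M" by auto
  have "Y q1 \<le> M" using M_ge q1(1) by blast
  hence Mpos: "M > 0" using q1(2) by linarith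
  have step: "\<delta> r a \<in> T \<and> Y (\<delta> r a) = M" if rT: "r \<in> T" "Y r = M" "a \<in> A" for r a
  proof -
    define z where "z b = (if \<delta> r b \<in> T then Y (\<delta> r b) else 0)" for b
    have zle: "\<forall>b\<in>A. z b \<le> M" using M_ge Mpos by (auto simp: z_def)
    have "(\<Sum>b\<in>A. p b * (M - z b)) = M * sum p A - (\<Sum>b\<in>A. p b * z b)"
      by (simp add: sum_subtractf sum_distrib_left right_diff_distrib mult.commute)
    also have "\<dots> = 0"
    proof -
      have "Y r = (\<Sum>b\<in>A. p b * z b)" using eq rT(1) unfolding z_def by blast
      thus ?thesis using rT(2) sum1 by simp
    qed
    finally have s0: "(\<Sum>b\<in>A. p b * (M - z b)) = 0" .
    have nn: "\<And>b. b \<in> A \<Longrightarrow> 0 \<le> p b * (M - z b)" using zle pos by (simp add: less_imp_le)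
    have "\<forall>b\<in>A. p b * (M - z b) = 0" using sum_nonneg_eq_0_iff[OF finA, of "\<lambda>b. p b * (M - z b)"] nn s0 by blast
    hence "p a * (M - z a) = 0" using rT(3) by blast
    hence za: "z a = M" using pos rT(3) by auto
    have inT: "\<delta> r a \<in> T"
    proof (rule ccontr)
      assume "\<delta> r a \<notin> T"
      hence "z a = 0" by (simp add: z_def)
      thus False using za Mpos by simp
    qed
    thus ?thesis using za by (simp add: z_def)
  qed
  have runR: "run \<delta> r v \<in> T \<and> Y (run \<delta> r v) = M" if "set v \<subseteq> A" "r \<in> T" "Y r = M" for v r
    using that
  proof (induction v arbitrary: r)
    case Nil then show ?case by simp
  next
    case (Cons a v)
    then show ?case using step[of r a] by simp
  qed
  from esc r obtain v where "set v \<subseteq> A" "run \<delta> r v \<notin> T" by auto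
  with runR[OF this(1) r] show False by simp
qed


subsection \<open>Linear algebra: absorption probabilities are rational\<close>

lemma linalg:
  fixes T :: "'q set" and A :: "nat set" and \<delta> :: "'q \<Rightarrow> nat \<Rightarrow> 'q" and B :: "'q set" and q0 :: 'q
  assumes finT: "finite T" and finA: "finite A" and AN: "A \<subseteq> {1..N}" and q0: "q0 \<in> T"
    and esc: "\<forall>q\<in>T. \<exists>v. set v \<subseteq> A \<and> run \<delta> q v \<notin> T"
  shows "\<exists>g h. g \<in> int_poly_fun N \<and> h \<in> int_poly_fun N \<and>
     (\<forall>(p::nat\<Rightarrow>real) (X::'q\<Rightarrow>real). (\<forall>a\<in>A. p a > 0) \<and> sum p A = 1 \<and>
        (\<forall>q\<in>T. X q = (\<Sum>a\<in>A. p a * (if \<delta> q a \<in> T then X (\<delta> q a) else if \<delta> q a \<in> B then 1 else 0)))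
        \<longrightarrow> h p \<noteq> 0 \<and> X q0 = g p / h p)"
proof -
  define n where "n = card T"
  obtain e where e: "bij_betw e {0..<n} T" using ex_bij_betw_nat_finite[OF finT] n_def by blast
  have eT: "\<And>k. k < n \<Longrightarrow> e k \<in> T" using e by (auto simp: bij_betw_def)
  define M where "M x = mat n n (\<lambda>(i,k). (if i = k then 1 else 0) - (\<Sum>a\<in>A. if \<delta> (e i) a = e k then x a else 0))"
    for x :: "nat \<Rightarrow> real"
  define bb where "bb x = vec n (\<lambda>i. \<Sum>a\<in>A. if \<delta> (e i) a \<notin> T \<and> \<delta> (e i) a \<in> B then x a else 0)"
    for x :: "nat \<Rightarrow> real"
  define i0 where "i0 = inv_into {0..<n} e q0"
  have surj: "e ` {0..<n} = T" using e by (simp add: bij_betw_def)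
  have inj: "inj_on e {0..<n}" using e by (simp add: bij_betw_def)
  have i0: "i0 < n" "e i0 = q0"
    using q0 surj inv_into_into[of q0 e "{0..<n}"] f_inv_into_f[of q0 e "{0..<n}"]
    by (auto simp: i0_def)
  define g where "g = (\<lambda>x. det (replace_col (M x) (bb x) i0))"
  define h where "h = (\<lambda>x. det (M x))"
  have Mcar: "\<And>x. M x \<in> carrier_mat n n" by (simp add: M_def)
  have bcar: "\<And>x. bb x \<in> carrier_vec n" by (simp add: bb_def)
  have Ment: "\<And>x i k. i < n \<Longrightarrow> k < n \<Longrightarrow> M x $$ (i,k) =
      (if i = k then 1 else 0) - (\<Sum>a\<in>A. if \<delta> (e i) a = e k then x a else 0)"
    by (simp add: M_def)
  have Mpoly: "(\<lambda>x. M x $$ (i,k)) \<in> int_poly_fun N" if "i < n" "k < n" for i k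
  proof -
    have "(\<lambda>x. M x $$ (i,k)) = (\<lambda>x. (if i = k then 1 else 0) - (\<Sum>a\<in>A. if \<delta> (e i) a = e k then x a else 0))"
      using Ment that by auto
    also have "\<dots> \<in> int_poly_fun N"
      by (intro ipf_diff ipf_ite01 ipf_sum finA ipf_var_or0) (use AN in auto)
    finally show ?thesis .
  qed
  have bpoly: "(\<lambda>x. vec_index (bb x) i) \<in> int_poly_fun N" if "i < n" for i
  proof -
    have "(\<lambda>x. vec_index (bb x) i) = (\<lambda>x. \<Sum>a\<in>A. if \<delta> (e i) a \<notin> T \<and> \<delta> (e i) a \<in> B then x a else 0)"
      using that by (auto simp: bb_def)
    also have "\<dots> \<in> int_poly_fun N"
      by (intro ipf_sum finA ipf_var_or0) (use AN in auto)
    finally show ?thesis .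
  qed
  have hpoly: "h \<in> int_poly_fun N" unfolding h_def by (rule ipf_det[OF Mcar Mpoly])
  have gpoly: "g \<in> int_poly_fun N" unfolding g_def
  proof (rule ipf_det)
    show "\<And>x. replace_col (M x) (bb x) i0 \<in> carrier_mat n n"
      using carrier_matD[OF Mcar] by (simp add: replace_col_def)
    fix i k assume ik: "i < n" "k < n"
    have "(\<lambda>x. replace_col (M x) (bb x) i0 $$ (i, k)) =
          (\<lambda>x. if k = i0 then vec_index (bb x) i else M x $$ (i,k))"
      using ik carrier_matD[OF Mcar] by (simp add: replace_col_def)
    also have "\<dots> \<in> int_poly_fun N"
      using ik bpoly Mpoly by (cases "k = i0") auto
    finally show "(\<lambda>x. replace_col (M x) (bb x) i0 $$ (i, k)) \<in> int_poly_fun N" .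
  qed
  have key: "(\<Sum>k\<in>{0..<n}. if c = e k then Z (e k) else 0) = (if c \<in> T then Z c else 0)"
    for c :: 'q and Z :: "'q \<Rightarrow> real"
  proof -
    have "(\<Sum>k\<in>{0..<n}. (\<lambda>q. if c = q then Z q else 0) (e k)) = (\<Sum>q\<in>T. if c = q then Z q else 0)"
      by (rule sum.reindex_bij_betw[OF e])
    then show ?thesis using finT by (simp add: sum.delta')
  qed
  have Mv: "vec_index (M x *\<^sub>v vec n (\<lambda>k. Z (e k))) i =
      Z (e i) - (\<Sum>a\<in>A. x a * (if \<delta> (e i) a \<in> T then Z (\<delta> (e i) a) else 0))"
    if i: "i < n" for x Z i
  proof -
    have "vec_index (M x *\<^sub>v vec n (\<lambda>k. Z (e k))) i = (\<Sum>k\<in>{0..<n}. M x $$ (i,k) * Z (e k))"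
      using i Mcar[of x] by (auto simp: scalar_prod_def intro!: sum.cong)
    also have "\<dots> = (\<Sum>k\<in>{0..<n}. (if i = k then Z (e k) else 0)
                   - (\<Sum>a\<in>A. x a * (if \<delta> (e i) a = e k then Z (e k) else 0)))"
      using i by (auto simp: Ment left_diff_distrib sum_distrib_right intro!: sum.cong)
    also have "\<dots> = Z (e i) - (\<Sum>a\<in>A. x a * (\<Sum>k\<in>{0..<n}. if \<delta> (e i) a = e k then Z (e k) else 0))"
      using i by (simp add: sum_subtractf sum.swap[of _ "{0..<n}" A] sum_distrib_left)
    also have "\<dots> = Z (e i) - (\<Sum>a\<in>A. x a * (if \<delta> (e i) a \<in> T then Z (\<delta> (e i) a) else 0))"
      by (simp add: key)
    finally show ?thesis .
  qed
  have main: "\<forall>(p::nat\<Rightarrow>real) (X::'q\<Rightarrow>real). (\<forall>a\<in>A. p a > 0) \<and> sum p A = 1 \<and>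
        (\<forall>q\<in>T. X q = (\<Sum>a\<in>A. p a * (if \<delta> q a \<in> T then X (\<delta> q a) else if \<delta> q a \<in> B then 1 else 0)))
        \<longrightarrow> h p \<noteq> 0 \<and> X q0 = g p / h p"
  proof (intro allI impI)
    fix p :: "nat \<Rightarrow> real" and X :: "'q \<Rightarrow> real"
    assume hyp: "(\<forall>a\<in>A. p a > 0) \<and> sum p A = 1 \<and>
        (\<forall>q\<in>T. X q = (\<Sum>a\<in>A. p a * (if \<delta> q a \<in> T then X (\<delta> q a) else if \<delta> q a \<in> B then 1 else 0)))"
    hence pos: "\<forall>a\<in>A. p a > 0" and sum1: "sum p A = 1"
      and Xeq: "\<And>q. q \<in> T \<Longrightarrow> X q = (\<Sum>a\<in>A. p a * (if \<delta> q a \<in> T then X (\<delta> q a) else if \<delta> q a \<in> B then 1 else 0))"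
      by auto
    define Xv where "Xv = vec n (\<lambda>k. X (e k))"
    have Xcar: "Xv \<in> carrier_vec n" by (simp add: Xv_def)
    have MX: "M p *\<^sub>v Xv = bb p"
    proof (rule eq_vecI)
      show "dim_vec (M p *\<^sub>v Xv) = dim_vec (bb p)" using Mcar[of p] by (simp add: bb_def)
      fix i assume "i < dim_vec (bb p)"
      hence i: "i < n" by (simp add: bb_def)
      have Xi: "X (e i) = (\<Sum>a\<in>A. p a * (if \<delta> (e i) a \<in> T then X (\<delta> (e i) a) else if \<delta> (e i) a \<in> B then 1 else 0))"
        using Xeq eT[OF i] by blast
      have "vec_index (M p *\<^sub>v Xv) i = X (e i) - (\<Sum>a\<in>A. p a * (if \<delta> (e i) a \<in> T then X (\<delta> (e i) a) else 0))"
        unfolding Xv_def by (rule Mv[OF i])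
      also have "\<dots> = (\<Sum>a\<in>A. p a * (if \<delta> (e i) a \<in> T then X (\<delta> (e i) a) else if \<delta> (e i) a \<in> B then 1 else 0)
                         - p a * (if \<delta> (e i) a \<in> T then X (\<delta> (e i) a) else 0))"
        unfolding Xi by (simp add: sum_subtractf)
      also have "\<dots> = (\<Sum>a\<in>A. if \<delta> (e i) a \<notin> T \<and> \<delta> (e i) a \<in> B then p a else 0)"
        by (intro sum.cong) auto
      also have "\<dots> = vec_index (bb p) i" using i by (simp add: bb_def)
      finally show "vec_index (M p *\<^sub>v Xv) i = vec_index (bb p) i" .
    qed
    have detnz: "det (M p) \<noteq> 0"
    proof
      assume "det (M p) = 0"
      then obtain v where v: "v \<in> carrier_vec n" "v \<noteq> 0\<^sub>v n" "M p *\<^sub>v v = 0\<^sub>v n"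
        using det_0_iff_vec_prod_zero_field[OF Mcar[of p]] by blast
      define Y where "Y q = vec_index v (inv_into {0..<n} e q)" for q
      have Ye: "Y (e k) = vec_index v k" if "k < n" for k
        using that inj by (simp add: Y_def inv_into_f_f)
      have vv: "v = vec n (\<lambda>k. Y (e k))"
        using v(1) Ye by (intro eq_vecI) auto
      have Yeq: "\<forall>q\<in>T. Y q = (\<Sum>a\<in>A. p a * (if \<delta> q a \<in> T then Y (\<delta> q a) else 0))"
      proof
        fix q assume q: "q \<in> T"
        define i where "i = inv_into {0..<n} e q"
        have i: "i < n" "e i = q"
          using q surj inv_into_into[of q e "{0..<n}"] f_inv_into_f[of q e "{0..<n}"]
          by (auto simp: i_def)
        have "0 = vec_index (M p *\<^sub>v v) i" using v(3) i by simp
        also have "\<dots> = Y (e i) - (\<Sum>a\<in>A. p a * (if \<delta> (e i) a \<in> T then Y (\<delta> (e i) a) else 0))"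
          by (subst vv, rule Mv[OF i(1)])
        finally have eq0: "0 = Y (e i) - (\<Sum>a\<in>A. p a * (if \<delta> (e i) a \<in> T then Y (\<delta> (e i) a) else 0))" .
        show "Y q = (\<Sum>a\<in>A. p a * (if \<delta> q a \<in> T then Y (\<delta> q a) else 0))"
          using eq0 unfolding i(2) by linarith
      qed
      have Yneg: "\<forall>q\<in>T. (- Y q) = (\<Sum>a\<in>A. p a * (if \<delta> q a \<in> T then - Y (\<delta> q a) else 0))"
      proof
        fix q assume q: "q \<in> T"
        have h1: "Y q = (\<Sum>a\<in>A. p a * (if \<delta> q a \<in> T then Y (\<delta> q a) else 0))" using Yeq q by blast
        have "(\<Sum>a\<in>A. p a * (if \<delta> q a \<in> T then - Y (\<delta> q a) else 0))
              = (\<Sum>a\<in>A. - (p a * (if \<delta> q a \<in> T then Y (\<delta> q a) else 0)))"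
          by (intro sum.cong) auto
        also have "\<dots> = - Y q" unfolding h1 by (simp add: sum_negf)
        finally show "(- Y q) = (\<Sum>a\<in>A. p a * (if \<delta> q a \<in> T then - Y (\<delta> q a) else 0))" by simp
      qed
      have le1: "\<forall>q\<in>T. Y q \<le> 0" by (rule maxp[OF finT finA pos sum1 esc Yeq])
      have le2: "\<forall>q\<in>T. - Y q \<le> 0" by (rule maxp[OF finT finA pos sum1 esc Yneg])
      have "v = 0\<^sub>v n"
      proof (rule eq_vecI)
        fix k assume "k < dim_vec (0\<^sub>v n :: real Matrix.vec)"
        hence k: "k < n" by simp
        have "Y (e k) = 0" using le1 le2 eT[OF k] by force
        thus "vec_index v k = vec_index (0\<^sub>v n) k" using Ye[OF k] k by simp
      qed (use v(1) in simp)
      with v(2) show False by simp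
    qed
    have "det (replace_col (M p) (M p *\<^sub>v Xv) i0) = vec_index Xv i0 * det (M p)"
      by (rule cramer_lemma_mat[OF Mcar Xcar i0(1)])
    hence "g p = X q0 * h p" using MX i0 by (simp add: g_def h_def Xv_def)
    thus "h p \<noteq> 0 \<and> X q0 = g p / h p" using detnz by (simp add: h_def)
  qed
  show ?thesis using gpoly hpoly main by blast
qed


subsection \<open>Automaton languages from arbitrary states\<close>

locale aut =
  fixes s t :: nat and S :: "'q set" and q0 :: 'q and \<delta> :: "'q \<Rightarrow> nat \<Rightarrow> 'q" and SF :: "nat \<Rightarrow> 'q set"
  assumes isa: "is_automaton s t S q0 \<delta> SF"
begin

abbreviation FF :: "'q set" where "FF \<equiv> (\<Union>i\<in>{1..t+1}. SF i)"

definition lang :: "'q \<Rightarrow> nat \<Rightarrow> nat list set" where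
  "lang q j = {w. set w \<subseteq> alphabet s \<and> run \<delta> q w \<in> SF j \<and> (\<forall>k<length w. run \<delta> q (take k w) \<notin> FF)}"

lemma lang_q0: "automaton_lang s t q0 \<delta> SF j = lang q0 j"
  by (simp add: automaton_lang_def lang_def)

lemma disj: "i \<in> {1..t+1} \<Longrightarrow> j \<in> {1..t+1} \<Longrightarrow> r \<in> SF i \<Longrightarrow> r \<in> SF j \<Longrightarrow> i = j"
  using isa unfolding is_automaton_def by blast

lemma lang_final:
  assumes j: "j \<in> {1..t+1}" and i: "i \<in> {1..t+1}" and r: "r \<in> SF i"
  shows "lang r j = (if i = j then {[]} else {})"
proof -
  have "w \<in> lang r j \<longleftrightarrow> w = [] \<and> i = j" for w
  proof
    assume w: "w \<in> lang r j"
    have "w = []"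
    proof (rule ccontr)
      assume "w \<noteq> []"
      hence "run \<delta> r (take 0 w) \<notin> FF" using w by (auto simp: lang_def)
      thus False using r i by auto
    qed
    moreover have "r \<in> SF j" using w \<open>w = []\<close> by (simp add: lang_def)
    ultimately show "w = [] \<and> i = j" using disj[OF i j r] by auto
  next
    assume "w = [] \<and> i = j"
    thus "w \<in> lang r j" using r by (simp add: lang_def)
  qed
  thus ?thesis by auto
qed

lemma lang_empty:
  assumes j: "j \<in> {1..t+1}" and nc: "\<not> (\<exists>v. set v \<subseteq> alphabet s \<and> run \<delta> r v \<in> FF)"
  shows "lang r j = {}"
  using assms by (auto simp: lang_def)

definition reach :: "'q \<Rightarrow> bool" where
  "reach q \<longleftrightarrow> (\<exists>u. set u \<subseteq> alphabet s \<and> run \<delta> q0 u = q \<and> (\<forall>k\<le>length u. run \<delta> q0 (take k u) \<notin> FF))"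

definition coreach :: "'q \<Rightarrow> bool" where
  "coreach q \<longleftrightarrow> (\<exists>v. set v \<subseteq> alphabet s \<and> run \<delta> q v \<in> FF)"

lemma reach_notF: "reach q \<Longrightarrow> q \<notin> FF"
  unfolding reach_def by (metis order_refl take_all)

lemma reach_q0: "q0 \<notin> FF \<Longrightarrow> reach q0"
  unfolding reach_def by (intro exI[of _ "[]"]) auto

lemma reach_succ:
  assumes "reach q" "a \<in> alphabet s" "\<delta> q a \<notin> FF"
  shows "reach (\<delta> q a)"
proof -
  obtain u where u: "set u \<subseteq> alphabet s" "run \<delta> q0 u = q" "\<forall>k\<le>length u. run \<delta> q0 (take k u) \<notin> FF"
    using assms(1) by (auto simp: reach_def)
  have "\<forall>k\<le>length (u@[a]). run \<delta> q0 (take k (u@[a])) \<notin> FF"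
  proof (intro allI impI)
    fix k assume k: "k \<le> length (u@[a])"
    show "run \<delta> q0 (take k (u@[a])) \<notin> FF"
    proof (cases "k \<le> length u")
      case True thus ?thesis using u(3) by simp
    next
      case False
      hence "k = length u + 1" using k by simp
      thus ?thesis using u(2) assms(3) by simp
    qed
  qed
  thus ?thesis unfolding reach_def using u assms(2)
    by (intro exI[of _ "u@[a]"]) auto
qed

lemma reach_append:
  assumes u: "set u \<subseteq> alphabet s" "run \<delta> q0 u = q" "\<forall>k\<le>length u. run \<delta> q0 (take k u) \<notin> FF"
    and w: "w \<in> lang q j"
  shows "u @ w \<in> lang q0 j"
proof -
  have w': "set w \<subseteq> alphabet s" "run \<delta> q w \<in> SF j" "\<forall>k<length w. run \<delta> q (take k w) \<notin> FF"
    using w by (auto simp: lang_def)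
  have "\<forall>k<length (u@w). run \<delta> q0 (take k (u@w)) \<notin> FF"
  proof (intro allI impI)
    fix k assume k: "k < length (u@w)"
    show "run \<delta> q0 (take k (u@w)) \<notin> FF"
    proof (cases "k \<le> length u")
      case True thus ?thesis using u(3) by simp
    next
      case False
      hence "take k (u@w) = u @ take (k - length u) w" by simp
      moreover have "k - length u < length w" using k False by simp
      ultimately show ?thesis using u(2) w'(3) by simp
    qed
  qed
  thus ?thesis using u w' by (simp add: lang_def)
qed

lemma summable_reach:
  assumes p: "p \<in> open_simplex s" and rq: "reach q" and sq0: "word_prob p summable_on lang q0 j"
  shows "word_prob p summable_on lang q j"
proof -
  obtain u where u: "set u \<subseteq> alphabet s" "run \<delta> q0 u = q" "\<forall>k\<le>length u. run \<delta> q0 (take k u) \<notin> FF"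
    using rq by (auto simp: reach_def)
  have "(append u) ` lang q j \<subseteq> lang q0 j" using reach_append[OF u] by auto
  hence "word_prob p summable_on (append u) ` lang q j" by (rule summable_on_subset_banach[OF sq0])
  hence "(word_prob p \<circ> append u) summable_on lang q j"
    by (subst (asm) summable_on_reindex) (auto simp: inj_on_def)
  hence "(\<lambda>w. word_prob p u * word_prob p w) summable_on lang q j"
    by (simp add: o_def word_prob_append)
  thus ?thesis
    using summable_on_cmult_right'[of "word_prob p u" "word_prob p" "lang q j"]
      word_prob_pos[OF p u(1)] by simp
qed

lemma lang_cons:
  assumes r: "r \<notin> FF" and j: "j \<in> {1..t+1}"
  shows "bij_betw (\<lambda>(a,w). a # w) (SIGMA a:alphabet s. lang (\<delta> r a) j) (lang r j)"
proof (rule bij_betwI')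
  show "\<And>x y. x \<in> (SIGMA a:alphabet s. lang (\<delta> r a) j) \<Longrightarrow> y \<in> (SIGMA a:alphabet s. lang (\<delta> r a) j) \<Longrightarrow>
     ((case x of (a, w) \<Rightarrow> a # w) = (case y of (a, w) \<Rightarrow> a # w)) = (x = y)" by auto
next
  fix x assume "x \<in> (SIGMA a:alphabet s. lang (\<delta> r a) j)"
  then obtain a w where x: "x = (a,w)" "a \<in> alphabet s" "w \<in> lang (\<delta> r a) j" by auto
  have "\<forall>k<length (a#w). run \<delta> r (take k (a#w)) \<notin> FF"
  proof (intro allI impI)
    fix k assume k: "k < length (a#w)"
    show "run \<delta> r (take k (a#w)) \<notin> FF"
    proof (cases k)
      case 0 thus ?thesis using r by simp
    next
      case (Suc k')
      thus ?thesis using x(3) k by (simp add: lang_def)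
    qed
  qed
  thus "(case x of (a, w) \<Rightarrow> a # w) \<in> lang r j" using x by (simp add: lang_def)
next
  fix y assume y: "y \<in> lang r j"
  have "y \<noteq> []"
  proof
    assume "y = []"
    hence "r \<in> SF j" using y by (simp add: lang_def)
    thus False using r j by auto
  qed
  then obtain a w where yw: "y = a # w" by (cases y) auto
  have "a \<in> alphabet s" "set w \<subseteq> alphabet s" using y yw by (auto simp: lang_def)
  moreover have "run \<delta> (\<delta> r a) w \<in> SF j" using y yw by (simp add: lang_def)
  moreover have "\<forall>k<length w. run \<delta> (\<delta> r a) (take k w) \<notin> FF"
  proof (intro allI impI)
    fix k assume "k < length w"
    hence "Suc k < length y" using yw by simp
    hence "run \<delta> r (take (Suc k) y) \<notin> FF" using y by (simp add: lang_def)
    thus "run \<delta> (\<delta> r a) (take k w) \<notin> FF" using yw by simp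
  qed
  ultimately have "(a, w) \<in> (SIGMA a:alphabet s. lang (\<delta> r a) j)" by (simp add: lang_def)
  thus "\<exists>x\<in>(SIGMA a:alphabet s. lang (\<delta> r a) j). y = (case x of (a, w) \<Rightarrow> a # w)"
    using yw by force
qed

lemma X_rec:
  assumes p: "p \<in> open_simplex s" and r: "r \<notin> FF" and j: "j \<in> {1..t+1}"
    and sm: "word_prob p summable_on lang r j"
  shows "infsum (word_prob p) (lang r j) = (\<Sum>a\<in>alphabet s. p a * infsum (word_prob p) (lang (\<delta> r a) j))"
proof -
  note bij = lang_cons[OF r j]
  have "infsum (word_prob p) (lang r j) = infsum (\<lambda>x. word_prob p ((\<lambda>(a,w). a # w) x)) (SIGMA a:alphabet s. lang (\<delta> r a) j)"
    by (rule infsum_reindex_bij_betw[OF bij, symmetric])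
  also have "\<dots> = infsum (\<lambda>(a,w). word_prob p (a # w)) (SIGMA a:alphabet s. lang (\<delta> r a) j)"
    by (simp add: case_prod_unfold)
  also have "\<dots> = infsum (\<lambda>a. infsum (\<lambda>w. word_prob p (a # w)) (lang (\<delta> r a) j)) (alphabet s)"
  proof (rule infsum_Sigma'_banach[symmetric])
    have "(\<lambda>x. word_prob p ((\<lambda>(a,w). a # w) x)) summable_on (SIGMA a:alphabet s. lang (\<delta> r a) j)"
      using summable_on_reindex_bij_betw[OF bij] sm by blast
    thus "(\<lambda>(a,w). word_prob p (a # w)) summable_on (SIGMA a:alphabet s. lang (\<delta> r a) j)"
      by (simp add: case_prod_unfold)
  qed
  also have "\<dots> = (\<Sum>a\<in>alphabet s. p a * infsum (word_prob p) (lang (\<delta> r a) j))"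
    by (simp add: alphabet_def infsum_cmult_right')
  finally show ?thesis .
qed

lemma X_eq:
  assumes p: "p \<in> open_simplex s" and j: "j \<in> {1..t+1}" and rq: "reach q"
    and sq0: "word_prob p summable_on lang q0 j"
  shows "infsum (word_prob p) (lang q j) = (\<Sum>a\<in>alphabet s. p a *
     (if reach (\<delta> q a) \<and> coreach (\<delta> q a) then infsum (word_prob p) (lang (\<delta> q a) j)
      else if \<delta> q a \<in> SF j then 1 else 0))"
proof -
  have "infsum (word_prob p) (lang q j) = (\<Sum>a\<in>alphabet s. p a * infsum (word_prob p) (lang (\<delta> q a) j))"
    by (rule X_rec[OF p reach_notF[OF rq] j summable_reach[OF p rq sq0]])
  also have "\<dots> = (\<Sum>a\<in>alphabet s. p a *
     (if reach (\<delta> q a) \<and> coreach (\<delta> q a) then infsum (word_prob p) (lang (\<delta> q a) j)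
      else if \<delta> q a \<in> SF j then 1 else 0))"
  proof (rule sum.cong[OF refl])
    fix a assume a: "a \<in> alphabet s"
    show "p a * infsum (word_prob p) (lang (\<delta> q a) j) = p a *
     (if reach (\<delta> q a) \<and> coreach (\<delta> q a) then infsum (word_prob p) (lang (\<delta> q a) j)
      else if \<delta> q a \<in> SF j then 1 else 0)"
    proof (cases "\<delta> q a \<in> FF")
      case True
      then obtain i where i: "i \<in> {1..t+1}" "\<delta> q a \<in> SF i" by auto
      have nr: "\<not> reach (\<delta> q a)" using True reach_notF by blast
      have iff: "\<delta> q a \<in> SF j \<longleftrightarrow> i = j" using disj[OF i(1) j i(2)] i(2) by auto
      show ?thesis using lang_final[OF j i] nr iff by auto
    next
      case False
      have rr: "reach (\<delta> q a)" by (rule reach_succ[OF rq a False])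
      show ?thesis
      proof (cases "coreach (\<delta> q a)")
        case True thus ?thesis using rr by simp
      next
        case False
        hence "lang (\<delta> q a) j = {}" using lang_empty[OF j] by (simp add: coreach_def)
        moreover have "\<delta> q a \<notin> SF j" using \<open>\<delta> q a \<notin> FF\<close> j by auto
        ultimately show ?thesis using False by simp
      qed
    qed
  qed
  finally show ?thesis .
qed

lemma run_in_S: "q \<in> S \<Longrightarrow> set u \<subseteq> alphabet s \<Longrightarrow> run \<delta> q u \<in> S"
proof (induction u arbitrary: q)
  case Nil then show ?case by simp
next
  case (Cons a u)
  have cl: "\<forall>q\<in>S. \<forall>a\<in>alphabet s. \<delta> q a \<in> S" using isa by (simp add: is_automaton_def)
  have "\<delta> q a \<in> S" using cl Cons.prems by simp
  thus ?case using Cons by simp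
qed

lemma reach_in_S: assumes "reach q" shows "q \<in> S"
proof -
  obtain u where u: "set u \<subseteq> alphabet s" "run \<delta> q0 u = q" using assms by (auto simp: reach_def)
  have "q0 \<in> S" using isa by (simp add: is_automaton_def)
  thus ?thesis using run_in_S[OF _ u(1)] u(2) by blast
qed

end


theorem proposition2p8:
  fixes s t :: nat
    and f :: "nat \<Rightarrow> (nat \<Rightarrow> real) \<Rightarrow> real"
    and S :: "'q set" and q0 :: 'q and \<delta> :: "'q \<Rightarrow> nat \<Rightarrow> 'q" and SF :: "nat \<Rightarrow> 'q set"
  assumes "s \<ge> 1" and "t \<ge> 1"
    and "\<forall>p\<in>open_simplex s. (\<forall>j\<in>{1..t+1}. 0 < f j p \<and> f j p < 1) \<and> (\<Sum>j=1..t+1. f j p) = 1"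
    and "automaton_simulates s t S q0 \<delta> SF f"
  shows "\<forall>j\<in>{1..t+1}. \<exists>g h. g \<in> int_poly_fun (s+1) \<and> h \<in> int_poly_fun (s+1)
            \<and> (\<forall>p\<in>open_simplex s. h p \<noteq> 0 \<and> f j p = g p / h p)"
proof
  fix j assume j: "j \<in> {1..t+1}"
  have isa: "is_automaton s t S q0 \<delta> SF" and sim: "simulation s t f (automaton_lang s t q0 \<delta> SF)"
    using assms(4) by (auto simp: automaton_simulates_def)
  interpret aut s t S q0 \<delta> SF by unfold_locales (rule isa)
  have hs: "(word_prob p has_sum f j p) (lang q0 j)" if "p \<in> open_simplex s" for p
    using sim j that by (simp add: simulation_def lang_q0)
  have fj: "f j p = infsum (word_prob p) (lang q0 j)" if "p \<in> open_simplex s" for p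
    using infsumI[OF hs[OF that]] by simp
  show "\<exists>g h. g \<in> int_poly_fun (s+1) \<and> h \<in> int_poly_fun (s+1)
            \<and> (\<forall>p\<in>open_simplex s. h p \<noteq> 0 \<and> f j p = g p / h p)"
  proof (cases "q0 \<in> FF")
    case True
    then obtain i where i: "i \<in> {1..t+1}" "q0 \<in> SF i" by auto
    have "\<forall>p\<in>open_simplex s. f j p = (if i = j then 1 else 0)"
      using fj lang_final[OF j i] by auto
    then show ?thesis using ipf_ite01 ipf_one
      by (intro exI[of _ "\<lambda>x. if i = j then 1 else 0"] exI[of _ "\<lambda>x. 1"]) auto
  next
    case notF: False
    show ?thesis
    proof (cases "coreach q0")
      case False
      hence "lang q0 j = {}" using lang_empty[OF j] by (simp add: coreach_def)
      hence "\<forall>p\<in>open_simplex s. f j p = 0" using fj by simp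
      then show ?thesis using ipf_zero ipf_one
        by (intro exI[of _ "\<lambda>x. 0"] exI[of _ "\<lambda>x. 1"]) auto
    next
      case True
      define T where "T = {q. reach q \<and> coreach q}"
      have "T \<subseteq> S" using reach_in_S by (auto simp: T_def)
      moreover have "finite S" using isa by (simp add: is_automaton_def)
      ultimately have finT: "finite T" by (rule finite_subset)
      have q0T: "q0 \<in> T" using reach_q0[OF notF] True by (simp add: T_def)
      have esc: "\<forall>q\<in>T. \<exists>v. set v \<subseteq> alphabet s \<and> run \<delta> q v \<notin> T"
      proof
        fix q assume "q \<in> T"
        then obtain v where v: "set v \<subseteq> alphabet s" "run \<delta> q v \<in> FF" by (auto simp: T_def coreach_def)
        have "run \<delta> q v \<notin> T" using v(2) reach_notF by (auto simp: T_def)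
        thus "\<exists>v. set v \<subseteq> alphabet s \<and> run \<delta> q v \<notin> T" using v(1) by blast
      qed
      have finA: "finite (alphabet s)" by (simp add: alphabet_def)
      have AN: "alphabet s \<subseteq> {1..s+1}" by (simp add: alphabet_def)
      obtain g h where g: "g \<in> int_poly_fun (s+1)" and h: "h \<in> int_poly_fun (s+1)"
        and main: "\<forall>(p::nat\<Rightarrow>real) (X::'q\<Rightarrow>real). (\<forall>a\<in>alphabet s. p a > 0) \<and> sum p (alphabet s) = 1 \<and>
          (\<forall>q\<in>T. X q = (\<Sum>a\<in>alphabet s. p a * (if \<delta> q a \<in> T then X (\<delta> q a) else if \<delta> q a \<in> SF j then 1 else 0)))
          \<longrightarrow> h p \<noteq> 0 \<and> X q0 = g p / h p"
        using linalg[OF finT finA AN q0T esc, where B = "SF j"] by blast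
      have "\<forall>p\<in>open_simplex s. h p \<noteq> 0 \<and> f j p = g p / h p"
      proof
        fix p assume p: "p \<in> open_simplex s"
        define X where "X q = infsum (word_prob p) (lang q j)" for q
        have sq0: "word_prob p summable_on lang q0 j" using hs[OF p] by (auto simp: summable_on_def)
        have XT: "\<forall>q\<in>T. X q = (\<Sum>a\<in>alphabet s. p a * (if \<delta> q a \<in> T then X (\<delta> q a) else if \<delta> q a \<in> SF j then 1 else 0))"
        proof
          fix q assume "q \<in> T"
          hence rq: "reach q" by (simp add: T_def)
          show "X q = (\<Sum>a\<in>alphabet s. p a * (if \<delta> q a \<in> T then X (\<delta> q a) else if \<delta> q a \<in> SF j then 1 else 0))"
            unfolding X_def T_def mem_Collect_eq by (rule X_eq[OF p j rq sq0])
        qed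
        have pos: "\<forall>a\<in>alphabet s. p a > 0" using simplex_pos[OF p] by blast
        have "h p \<noteq> 0 \<and> X q0 = g p / h p"
          using main pos simplex_sum[OF p] XT by blast
        thus "h p \<noteq> 0 \<and> f j p = g p / h p" using fj[OF p] by (simp add: X_def)
      qed
      thus ?thesis using g h by blast
    qed
  qed
qed

end
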